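(* Let $m\ge 3$ and let $K\ne\Delta_{[m]}$ be a simplicial complex on $[m]$. If $\mathrm{Bier}(K)$ is a weak suspension but not a suspension, then $\chi(\mathrm{Bier}(K))=m$.
   Context: A simplicial complex $K$ on $[m]=\{1,\dots,m\}$ is a nonempty family of subsets of $[m]$ closed under taking subsets; $V(K)=\{i:\{i\}\in K\}$. $\Delta_{[m]}=2^{[m]}$. Let $[m']=\{1',\dots,m'\}$ be a disjoint copy of $[m]$, $I'=\{i':i\in I\}$. For $K\ne\Delta_{[m]}$ the Alexander dual $K^\vee$ is the complex on $[m']$ with $J'\in K^\vee$ iff $[m]\setminus J\notin K$. The Bier sphere $\mathrm{Bier}(K)$ is the complex on $[m]\sqcup[m']$ with faces $I\sqcup J'$, $I\in K$, $J'\in K^\vee$, $I\cap J=\varnothing$. The chromatic number $\chi(L)$ is the least number of colors in a map $c\colon V(L)\to C$ with $c(u)\ne c(v)$ whenever $\{u,v\}\in L$. A complex $L$ is a weak suspension if there exist distinct $a,b\in V(L)$ with $\{a,b\}\notin L$ such that each of $a,b$ forms an edge of $L$ with every vertex of $V(L)\setminus\{a,b\}$. $L$ (on vertex set $W$) is a suspension if there exist distinct $v,w\in W$ with $L=\{\varnothing,\{v\},\{w\}\}*\bigl(L\cap 2^{W\setminus\{v,w\}}\bigr)$, where $*$ denotes the join $K_1*K_2=\{\sigma_1\sqcup\sigma_2:\sigma_j\in K_j\}$. *)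

theory Defs
  imports Main
begin

definition simplicial_complex :: "nat \<Rightarrow> nat set set \<Rightarrow> bool" where
  "simplicial_complex m K \<longleftrightarrow> K \<noteq> {} \<and> K \<subseteq> Pow {1..m} \<and>
     (\<forall>\<sigma> \<in> K. \<forall>\<tau>. \<tau> \<subseteq> \<sigma> \<longrightarrow> \<tau> \<in> K)"

definition vertices :: "'a set set \<Rightarrow> 'a set" where
  "vertices L = {v. {v} \<in> L}"

text \<open>Alexander dual, on the copy [m'] (the copy i' of i is represented by i itself here;
  it is tagged with Inr inside the Bier sphere).\<close>
definition alexander_dual :: "nat \<Rightarrow> nat set set \<Rightarrow> nat set set" where
  "alexander_dual m K = {J. J \<subseteq> {1..m} \<and> {1..m} - J \<notin> K}"

text \<open>Bier sphere on [m] disjoint-union [m']: i is Inl i, i' is Inr i.\<close>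
definition bier :: "nat \<Rightarrow> nat set set \<Rightarrow> (nat + nat) set set" where
  "bier m K = {Inl ` I \<union> Inr ` J | I J. I \<in> K \<and> J \<in> alexander_dual m K \<and> I \<inter> J = {}}"

definition chromatic_number :: "'a set set \<Rightarrow> nat" where
  "chromatic_number L = (LEAST n. \<exists>c :: 'a \<Rightarrow> nat.
      (\<forall>v \<in> vertices L. c v < n) \<and>
      (\<forall>u \<in> vertices L. \<forall>v \<in> vertices L. u \<noteq> v \<and> {u, v} \<in> L \<longrightarrow> c u \<noteq> c v))"

definition weak_suspension :: "'a set set \<Rightarrow> bool" where
  "weak_suspension L \<longleftrightarrow> (\<exists>a \<in> vertices L. \<exists>b \<in> vertices L. a \<noteq> b \<and> {a, b} \<notin> L \<and>
      (\<forall>v \<in> vertices L - {a, b}. {a, v} \<in> L \<and> {b, v} \<in> L))"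

definition join :: "'a set set \<Rightarrow> 'a set set \<Rightarrow> 'a set set" where
  "join K1 K2 = {s1 \<union> s2 | s1 s2. s1 \<in> K1 \<and> s2 \<in> K2 \<and> s1 \<inter> s2 = {}}"

text \<open>Suspension, with vertex set W taken to be V(L).\<close>
definition suspension :: "'a set set \<Rightarrow> bool" where
  "suspension L \<longleftrightarrow> (\<exists>v \<in> vertices L. \<exists>w \<in> vertices L. v \<noteq> w \<and>
      L = join {{}, {v}, {w}} (L \<inter> Pow (vertices L - {v, w})))"

end

theory Submission
  imports Defs
begin

definition lp :: "(nat + nat) set \<Rightarrow> nat set" where "lp t = {x. Inl x \<in> t}"
definition rp :: "(nat + nat) set \<Rightarrow> nat set" where "rp t = {x. Inr x \<in> t}"

lemma split_sum_set: "t = Inl ` lp t \<union> Inr ` rp t"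
  unfolding lp_def rp_def
  apply (rule set_eqI) subgoal for x by (cases x) auto done

lemma bier_iff: "t \<in> bier m K \<longleftrightarrow> lp t \<in> K \<and> rp t \<in> alexander_dual m K \<and> lp t \<inter> rp t = {}"
proof
  assume "t \<in> bier m K"
  then obtain I J where t: "t = Inl ` I \<union> Inr ` J" and "I \<in> K" "J \<in> alexander_dual m K" "I \<inter> J = {}"
    unfolding bier_def by blast
  moreover have "lp t = I" "rp t = J" unfolding t lp_def rp_def by auto
  ultimately show "lp t \<in> K \<and> rp t \<in> alexander_dual m K \<and> lp t \<inter> rp t = {}" by simp
next
  assume "lp t \<in> K \<and> rp t \<in> alexander_dual m K \<and> lp t \<inter> rp t = {}"
  then show "t \<in> bier m K" unfolding bier_def using split_sum_set[of t] by blast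
qed

lemma lp_simps[simp]: "lp (insert (Inl x) t) = insert x (lp t)" "lp (insert (Inr x) t) = lp t"
  "lp {} = {}"
  unfolding lp_def by auto
lemma rp_simps[simp]: "rp (insert (Inr x) t) = insert x (rp t)" "rp (insert (Inl x) t) = rp t"
  "rp {} = {}"
  unfolding rp_def by auto

lemma sc_down: "simplicial_complex m K \<Longrightarrow> s \<in> K \<Longrightarrow> t \<subseteq> s \<Longrightarrow> t \<in> K"
  unfolding simplicial_complex_def by blast
lemma sc_sub: "simplicial_complex m K \<Longrightarrow> s \<in> K \<Longrightarrow> s \<subseteq> {1..m}"
  unfolding simplicial_complex_def by blast
lemma sc_empty: "simplicial_complex m K \<Longrightarrow> {} \<in> K"
  unfolding simplicial_complex_def by blast
lemma full_notin: assumes "simplicial_complex m K" "K \<noteq> Pow {1..m}" shows "{1..m} \<notin> K"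
proof
  assume "{1..m} \<in> K"
  hence "Pow {1..m} \<subseteq> K" using sc_down[OF assms(1)] by blast
  moreover have "K \<subseteq> Pow {1..m}" using assms(1) unfolding simplicial_complex_def by blast
  ultimately show False using assms(2) by blast
qed

lemma ad_empty: assumes "simplicial_complex m K" "K \<noteq> Pow {1..m}" shows "{} \<in> alexander_dual m K"
  using full_notin[OF assms] unfolding alexander_dual_def by simp

lemma ad_down: assumes "simplicial_complex m K" "J \<in> alexander_dual m K" "J' \<subseteq> J"
  shows "J' \<in> alexander_dual m K"
proof -
  have "{1..m} - J \<subseteq> {1..m} - J'" using assms(3) by blast
  then show ?thesis using assms sc_down[OF assms(1)] unfolding alexander_dual_def by blast
qed

lemma bier_down: assumes "simplicial_complex m K" "t \<in> bier m K" "t' \<subseteq> t" shows "t' \<in> bier m K"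
proof -
  have "lp t' \<subseteq> lp t" "rp t' \<subseteq> rp t" using assms(3) unfolding lp_def rp_def by auto
  moreover have "lp t \<in> K" "rp t \<in> alexander_dual m K" "lp t \<inter> rp t = {}" using assms(2) bier_iff by blast+
  ultimately have "lp t' \<in> K" "rp t' \<in> alexander_dual m K" "lp t' \<inter> rp t' = {}"
    using sc_down[OF assms(1)] ad_down[OF assms(1)] by blast+
  then show ?thesis using bier_iff by blast
qed

lemma bier_vert: assumes "simplicial_complex m K" "t \<in> bier m K" "v \<in> t" shows "v \<in> vertices (bier m K)"
  using bier_down[OF assms(1,2)] assms(3) unfolding vertices_def by blast

lemma susp_intro:
  assumes down: "\<And>t t'. t\<in>L \<Longrightarrow> t'\<subseteq>t \<Longrightarrow> t'\<in>L"
    and av: "a \<in> vertices L" and bv: "b \<in> vertices L" and ab: "a \<noteq> b" and nab: "{a,b} \<notin> L"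
    and ext: "\<And>s. s\<in>L \<Longrightarrow> a \<notin> s \<Longrightarrow> b \<notin> s \<Longrightarrow> insert a s \<in> L \<and> insert b s \<in> L"
  shows "suspension L"
proof -
  have vt: "\<And>t v. t \<in> L \<Longrightarrow> v \<in> t \<Longrightarrow> v \<in> vertices L"
    unfolding vertices_def using down by (metis empty_subsetI insert_subset mem_Collect_eq)
  let ?P = "L \<inter> Pow (vertices L - {a, b})"
  have "L = join {{}, {a}, {b}} ?P"
  proof
    show "L \<subseteq> join {{}, {a}, {b}} ?P"
    proof
      fix t assume t: "t \<in> L"
      have nboth: "\<not> (a \<in> t \<and> b \<in> t)"
      proof
        assume "a \<in> t \<and> b \<in> t"
        hence "{a,b} \<subseteq> t" by simp
        thus False using down[OF t] nab by blast
      qed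
      have tv: "t \<subseteq> vertices L" using vt[OF t] by blast
      have dm: "t - {x} \<in> L" for x using down[OF t, of "t - {x}"] by blast
      show "t \<in> join {{}, {a}, {b}} ?P"
      proof (cases "a \<in> t")
        case True
        hence e: "t = {a} \<union> (t - {a})" by blast
        have "t - {a} \<in> ?P" using dm tv nboth True by blast
        thus ?thesis unfolding join_def using e by blast
      next
        case False
        show ?thesis
        proof (cases "b \<in> t")
          case True
          hence e: "t = {b} \<union> (t - {b})" by blast
          have "t - {b} \<in> ?P" using dm tv False True by blast
          thus ?thesis unfolding join_def using e by blast
        next
          case False2: False
          have e: "t = {} \<union> t" by simp
          have "t \<in> ?P" using t False False2 tv by blast
          thus ?thesis unfolding join_def using e by blast
        qed
      qed
    qed
  next
    show "join {{}, {a}, {b}} ?P \<subseteq> L"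
    proof
      fix t assume "t \<in> join {{}, {a}, {b}} ?P"
      then obtain s1 s2 where t: "t = s1 \<union> s2" and s1: "s1 \<in> {{}, {a}, {b}}" and s2: "s2 \<in> ?P"
        unfolding join_def by blast
      have "a \<notin> s2" "b \<notin> s2" "s2 \<in> L" using s2 by auto
      with ext[OF this(3,1,2)] s1 t show "t \<in> L" by auto
    qed
  qed
  then show ?thesis unfolding suspension_def using av bv ab by blast
qed

lemma vert_Inl: assumes "simplicial_complex m K" "K \<noteq> Pow {1..m}"
  shows "Inl k \<in> vertices (bier m K) \<longleftrightarrow> {k} \<in> K"
  unfolding vertices_def using bier_iff ad_empty[OF assms] by auto

lemma vert_Inr: assumes "simplicial_complex m K"
  shows "Inr k \<in> vertices (bier m K) \<longleftrightarrow> {k} \<in> alexander_dual m K"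
  unfolding vertices_def using bier_iff sc_empty[OF assms] by auto


lemma lp_mem[simp]: "x \<in> lp t \<longleftrightarrow> Inl x \<in> t" unfolding lp_def by simp
lemma rp_mem[simp]: "x \<in> rp t \<longleftrightarrow> Inr x \<in> t" unfolding rp_def by simp

lemma ad_iff: "J \<in> alexander_dual m K \<longleftrightarrow> J \<subseteq> {1..m} \<and> {1..m} - J \<notin> K"
  unfolding alexander_dual_def by simp

lemma caseA_face:
  assumes SC: "simplicial_complex m K" and i: "i \<in> {1..m}" and A: "A \<in> K" "i \<notin> A" "insert i A \<notin> K"
  shows "\<exists>t \<in> bier m K. card t = m - 1 \<and> Inl i \<notin> t \<and> Inr i \<notin> t"
proof -
  define B where "B = {1..m} - insert i A"
  define t where "t = Inl ` A \<union> Inr ` B"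
  have Asub: "A \<subseteq> {1..m}" using sc_sub[OF SC A(1)] .
  have fA: "finite A" using Asub finite_subset by blast
  have lt: "lp t = A" "rp t = B" unfolding t_def lp_def rp_def by auto
  have "{1..m} - B = insert i A" unfolding B_def using Asub i by blast
  hence "B \<in> alexander_dual m K" using A(3) unfolding ad_iff B_def by auto
  moreover have "A \<inter> B = {}" unfolding B_def by blast
  ultimately have tin: "t \<in> bier m K" using bier_iff lt A(1) by simp
  have cB: "card B = m - card (insert i A)" unfolding B_def
    using Asub i fA by (subst card_Diff_subset) auto
  have ciA: "card (insert i A) = card A + 1" using fA A(2) by simp
  have "card (insert i A) \<le> m" using Asub i card_mono[of "{1..m}" "insert i A"] by simp
  have "card t = card (Inl ` A :: (nat + nat) set) + card (Inr ` B :: (nat + nat) set)"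
  proof -
    have d: "(Inl ` A :: (nat + nat) set) \<inter> Inr ` B = {}" by blast
    have fB: "finite B" unfolding B_def by simp
    show ?thesis unfolding t_def using card_Un_disjoint[OF _ _ d] fA fB by simp
  qed
  also have "\<dots> = card A + card B" by (simp add: card_image)
  finally have "card t = m - 1" using cB ciA \<open>card (insert i A) \<le> m\<close> by simp
  moreover have "Inl i \<notin> t" "Inr i \<notin> t" unfolding t_def B_def using A(2) by auto
  ultimately show ?thesis using tin by blast
qed

lemma good_face:
  assumes SC: "simplicial_complex m K" and KP: "K \<noteq> Pow {1..m}"
    and av: "a \<in> vertices (bier m K)" and bv: "b \<in> vertices (bier m K)" and ab: "a \<noteq> b"
    and nab: "{a,b} \<notin> bier m K"
    and adj: "\<And>v. v \<in> vertices (bier m K) \<Longrightarrow> v \<noteq> a \<Longrightarrow> v \<noteq> b \<Longrightarrow> {a,v} \<in> bier m K \<and> {b,v} \<in> bier m K"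
    and s: "s \<in> bier m K" "a \<notin> s" "b \<notin> s" "insert a s \<notin> bier m K"
  shows "\<exists>t \<in> bier m K. card t = m - 1 \<and> a \<notin> t \<and> b \<notin> t"
proof -
  define I where "I = lp s"
  define J where "J = rp s"
  have IK: "I \<in> K" and JA: "J \<in> alexander_dual m K" and IJ: "I \<inter> J = {}"
    using s(1) bier_iff unfolding I_def J_def by blast+
  have Isub: "I \<subseteq> {1..m}" using sc_sub[OF SC IK] .
  have Jsub: "J \<subseteq> {1..m}" and JnK: "{1..m} - J \<notin> K" using JA ad_iff by blast+
  have VL: "\<And>k. Inl k \<in> vertices (bier m K) \<longleftrightarrow> {k} \<in> K" using vert_Inl[OF SC KP] .
  have VR: "\<And>k. Inr k \<in> vertices (bier m K) \<longleftrightarrow> {k} \<in> alexander_dual m K" using vert_Inr[OF SC] .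
  have LR: "{Inl x, Inr y} \<in> bier m K \<longleftrightarrow> {x} \<in> K \<and> {y} \<in> alexander_dual m K \<and> x \<noteq> y" for x y
    using bier_iff[of "{Inl x, Inr y}"] by auto
  have RL: "{Inr y, Inl x} \<in> bier m K \<longleftrightarrow> {x} \<in> K \<and> {y} \<in> alexander_dual m K \<and> x \<noteq> y" for x y
    using LR by (simp add: insert_commute)
  show ?thesis
  proof (cases a)
    case (Inl i)
    have iK: "{i} \<in> K" using av Inl VL by simp
    have im: "i \<in> {1..m}" using sc_sub[OF SC iK] by simp
    have iI: "i \<notin> I" using s(2) Inl I_def by simp
    show ?thesis
    proof (cases b)
      case (Inl j)
      have ij: "i \<noteq> j" using ab Inl \<open>a = Inl i\<close> by simp
      have jK: "{j} \<in> K" using bv Inl VL by simp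
      have jI: "j \<notin> I" using s(3) Inl I_def by simp
      have ci: "{1..m} - {i} \<in> K"
      proof (rule ccontr)
        assume "{1..m} - {i} \<notin> K"
        hence "{i} \<in> alexander_dual m K" using im ad_iff by simp
        hence "Inr i \<in> vertices (bier m K)" using VR by simp
        hence "{a, Inr i} \<in> bier m K" using adj \<open>a = Inl i\<close> Inl by blast
        thus False using LR \<open>a = Inl i\<close> by simp
      qed
      have cj: "{1..m} - {j} \<in> K"
      proof (rule ccontr)
        assume "{1..m} - {j} \<notin> K"
        hence "{j} \<in> alexander_dual m K" using sc_sub[OF SC jK] ad_iff by simp
        hence "Inr j \<in> vertices (bier m K)" using VR by simp
        hence "{b, Inr j} \<in> bier m K" using adj \<open>a = Inl i\<close> Inl by blast
        thus False using LR Inl by simp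
      qed
      have iJ: "i \<notin> J"
      proof
        assume "i \<in> J"
        hence "{1..m} - J \<subseteq> {1..m} - {i}" by blast
        thus False using sc_down[OF SC ci] JnK by blast
      qed
      have "insert i I \<subseteq> {1..m} - {j}" using Isub im jI ij by blast
      hence "insert i I \<in> K" using sc_down[OF SC cj] by blast
      moreover have "insert a s \<in> bier m K \<longleftrightarrow> insert i I \<in> K \<and> J \<in> alexander_dual m K \<and> insert i I \<inter> J = {}"
        using bier_iff[of "insert a s"] \<open>a = Inl i\<close> unfolding I_def J_def by simp
      ultimately show ?thesis using s(4) JA IJ iJ by blast
    next
      case (Inr j)
      show ?thesis
      proof (cases "i = j")
        case False
        have "{j} \<in> alexander_dual m K" using bv Inr VR by simp
        hence "{a,b} \<in> bier m K" using LR iK False \<open>a = Inl i\<close> Inr by simp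
        thus ?thesis using nab by blast
      next
        case True
        have iJ: "i \<notin> J" using s(3) Inr True J_def by simp
        have "insert a s \<in> bier m K \<longleftrightarrow> insert i I \<in> K \<and> J \<in> alexander_dual m K \<and> insert i I \<inter> J = {}"
          using bier_iff[of "insert a s"] \<open>a = Inl i\<close> unfolding I_def J_def by simp
        hence "insert i I \<notin> K" using s(4) JA IJ iJ by blast
        from caseA_face[OF SC im IK iI this] show ?thesis using \<open>a = Inl i\<close> Inr True by simp
      qed
    qed
  next
    case (Inr i)
    have iA: "{i} \<in> alexander_dual m K" using av Inr VR by simp
    have im: "i \<in> {1..m}" using iA ad_iff by simp
    have iJ: "i \<notin> J" using s(2) Inr J_def by simp
    have ins: "insert a s \<in> bier m K \<longleftrightarrow> I \<in> K \<and> insert i J \<in> alexander_dual m K \<and> I \<inter> insert i J = {}"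
      using bier_iff[of "insert a s"] Inr unfolding I_def J_def by simp
    show ?thesis
    proof (cases b)
      case (Inl j)
      show ?thesis
      proof (cases "i = j")
        case False
        have "{j} \<in> K" using bv Inl VL by simp
        hence "{a,b} \<in> bier m K" using RL iA False Inr Inl by simp
        thus ?thesis using nab by blast
      next
        case True
        have iI: "i \<notin> I" using s(3) Inl True I_def by simp
        have "insert i J \<notin> alexander_dual m K" using ins s(4) IK IJ iI by blast
        hence AK: "{1..m} - insert i J \<in> K" using ad_iff Jsub im by blast
        have e: "insert i ({1..m} - insert i J) = {1..m} - J" using im iJ by blast
        from caseA_face[OF SC im AK] e JnK have "\<exists>t\<in>bier m K. card t = m - 1 \<and> Inl i \<notin> t \<and> Inr i \<notin> t"
          by simp
        thus ?thesis using Inr Inl True by auto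
      qed
    next
      case (Inr j)
      have ij: "i \<noteq> j" using ab Inr \<open>a = Inr i\<close> by simp
      have jA: "{j} \<in> alexander_dual m K" using bv Inr VR by simp
      have jm: "j \<in> {1..m}" using jA ad_iff by simp
      have jJ: "j \<notin> J" using s(3) Inr J_def by simp
      have niK: "{i} \<notin> K"
      proof
        assume "{i} \<in> K"
        hence "Inl i \<in> vertices (bier m K)" using VL by simp
        hence "{a, Inl i} \<in> bier m K" using adj \<open>a = Inr i\<close> Inr by blast
        thus False using RL \<open>a = Inr i\<close> by simp
      qed
      have njK: "{j} \<notin> K"
      proof
        assume "{j} \<in> K"
        hence "Inl j \<in> vertices (bier m K)" using VL by simp
        hence "{b, Inl j} \<in> bier m K" using adj \<open>a = Inr i\<close> Inr by blast
        thus False using RL Inr by simp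
      qed
      have iI: "i \<notin> I" using niK sc_down[OF SC IK] by blast
      have "insert i J \<notin> alexander_dual m K" using ins s(4) IK IJ iI by blast
      hence AK: "{1..m} - insert i J \<in> K" using ad_iff Jsub im by blast
      have "{j} \<subseteq> {1..m} - insert i J" using jm jJ ij by blast
      thus ?thesis using sc_down[OF SC AK] njK by blast
    qed
  qed
qed


lemma vert_range: assumes SC: "simplicial_complex m K" and KP: "K \<noteq> Pow {1..m}"
  and v: "v \<in> vertices (bier m K)" shows "case_sum (\<lambda>k. k - 1) (\<lambda>k. k - 1) v < m \<and> case_sum id id v \<in> {1..m}"
proof (cases v)
  case (Inl k)
  then have "{k} \<in> K" using v vert_Inl[OF SC KP] by simp
  then have "k \<in> {1..m}" using sc_sub[OF SC] by blast
  then show ?thesis using Inl by auto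
next
  case (Inr k)
  then have "{k} \<in> alexander_dual m K" using v vert_Inr[OF SC] by simp
  then have "k \<in> {1..m}" using ad_iff by blast
  then show ?thesis using Inr by auto
qed

lemma same_index_nonedge: "{Inl k, Inr k} \<notin> bier m K" "{Inr k, Inl k} \<notin> bier m K"
  using bier_iff[of "{Inl k, Inr k}"] bier_iff[of "{Inr k, Inl k}"] by auto

lemma chrom_upper: assumes SC: "simplicial_complex m K" and KP: "K \<noteq> Pow {1..m}"
  shows "\<exists>c :: nat + nat \<Rightarrow> nat. (\<forall>v \<in> vertices (bier m K). c v < m) \<and>
      (\<forall>u \<in> vertices (bier m K). \<forall>v \<in> vertices (bier m K). u \<noteq> v \<and> {u, v} \<in> bier m K \<longrightarrow> c u \<noteq> c v)"
proof (intro exI conjI ballI impI)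
  let ?c = "case_sum (\<lambda>k::nat. k - 1) (\<lambda>k. k - 1)"
  fix v assume "v \<in> vertices (bier m K)"
  then show "?c v < m" using vert_range[OF SC KP] by blast
next
  let ?c = "case_sum (\<lambda>k::nat. k - 1) (\<lambda>k. k - 1)"
  fix u v assume u: "u \<in> vertices (bier m K)" and v: "v \<in> vertices (bier m K)"
    and uv: "u \<noteq> v \<and> {u, v} \<in> bier m K"
  have ru: "case_sum id id u \<in> {1..m}" and rv: "case_sum id id v \<in> {1..m}"
    using vert_range[OF SC KP u] vert_range[OF SC KP v] by blast+
  show "?c u \<noteq> ?c v"
  proof
    assume eq: "?c u = ?c v"
    show False
    proof (cases u; cases v)
      fix k l assume "u = Inl k" "v = Inl l" thus False using eq ru rv uv by auto
    next
      fix k l assume a1: "u = Inl k" "v = Inr l"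
      hence "k = l" using eq ru rv by auto
      thus False using a1 uv same_index_nonedge by blast
    next
      fix k l assume a1: "u = Inr k" "v = Inl l"
      hence "k = l" using eq ru rv by auto
      thus False using a1 uv same_index_nonedge by blast
    next
      fix k l assume "u = Inr k" "v = Inr l" thus False using eq ru rv uv by auto
    qed
  qed
qed

lemma chrom_eq:
  assumes up: "\<exists>c :: 'a \<Rightarrow> nat. (\<forall>v \<in> vertices L. c v < m) \<and>
      (\<forall>u \<in> vertices L. \<forall>v \<in> vertices L. u \<noteq> v \<and> {u, v} \<in> L \<longrightarrow> c u \<noteq> c v)"
    and C: "C \<subseteq> vertices L" "finite C" "card C = m" "\<And>u v. u \<in> C \<Longrightarrow> v \<in> C \<Longrightarrow> u \<noteq> v \<Longrightarrow> {u,v} \<in> L"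
  shows "chromatic_number L = m"
  unfolding chromatic_number_def
proof (rule Least_equality)
  show "\<exists>c :: 'a \<Rightarrow> nat. (\<forall>v \<in> vertices L. c v < m) \<and>
      (\<forall>u \<in> vertices L. \<forall>v \<in> vertices L. u \<noteq> v \<and> {u, v} \<in> L \<longrightarrow> c u \<noteq> c v)" by (rule up)
next
  fix n assume "\<exists>c :: 'a \<Rightarrow> nat. (\<forall>v \<in> vertices L. c v < n) \<and>
      (\<forall>u \<in> vertices L. \<forall>v \<in> vertices L. u \<noteq> v \<and> {u, v} \<in> L \<longrightarrow> c u \<noteq> c v)"
  then obtain c :: "'a \<Rightarrow> nat" where c1: "\<forall>v \<in> vertices L. c v < n"
    and c2: "\<forall>u \<in> vertices L. \<forall>v \<in> vertices L. u \<noteq> v \<and> {u, v} \<in> L \<longrightarrow> c u \<noteq> c v" by blast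
  have inj: "inj_on c C" unfolding inj_on_def using C(1,4) c2 by blast
  have sub: "c ` C \<subseteq> {..<n}" using C(1) c1 by blast
  have "card (c ` C) = m" using card_image[OF inj] C(3) by simp
  moreover have "card (c ` C) \<le> n" using card_mono[OF _ sub] by simp
  ultimately show "m \<le> n" by simp
qed

theorem mainTheorem9:
  fixes m :: nat and K :: "nat set set"
  assumes "m \<ge> 3"
    and "simplicial_complex m K"
    and "K \<noteq> Pow {1..m}"
    and "weak_suspension (bier m K)"
    and "\<not> suspension (bier m K)"
  shows "chromatic_number (bier m K) = m"
proof -
  note SC = assms(2) and KP = assms(3)
  let ?L = "bier m K"
  obtain a b where av: "a \<in> vertices ?L" and bv: "b \<in> vertices ?L" and ab: "a \<noteq> b"
    and nab: "{a,b} \<notin> ?L" and adj0: "\<forall>v \<in> vertices ?L - {a, b}. {a, v} \<in> ?L \<and> {b, v} \<in> ?L"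
    using assms(4) unfolding weak_suspension_def by blast
  have adj: "\<And>v. v \<in> vertices ?L \<Longrightarrow> v \<noteq> a \<Longrightarrow> v \<noteq> b \<Longrightarrow> {a,v} \<in> ?L \<and> {b,v} \<in> ?L"
    using adj0 by blast
  have "\<exists>s \<in> ?L. a \<notin> s \<and> b \<notin> s \<and> (insert a s \<notin> ?L \<or> insert b s \<notin> ?L)"
  proof (rule ccontr)
    assume "\<not> ?thesis"
    hence "\<And>s. s\<in>?L \<Longrightarrow> a \<notin> s \<Longrightarrow> b \<notin> s \<Longrightarrow> insert a s \<in> ?L \<and> insert b s \<in> ?L" by blast
    from susp_intro[of ?L, OF _ av bv ab nab this] bier_down[OF SC] assms(5) show False by blast
  qed
  then obtain s where s: "s \<in> ?L" "a \<notin> s" "b \<notin> s" and s2: "insert a s \<notin> ?L \<or> insert b s \<notin> ?L" by blast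
  have "\<exists>t \<in> ?L. card t = m - 1 \<and> a \<notin> t \<and> b \<notin> t"
  proof (cases "insert a s \<notin> ?L")
    case True
    from good_face[OF SC KP av bv ab nab adj s True] show ?thesis .
  next
    case False
    hence nb: "insert b s \<notin> ?L" using s2 by blast
    have nba: "{b,a} \<notin> ?L" using nab by (simp add: insert_commute)
    have adj': "\<And>v. v \<in> vertices ?L \<Longrightarrow> v \<noteq> b \<Longrightarrow> v \<noteq> a \<Longrightarrow> {b,v} \<in> ?L \<and> {a,v} \<in> ?L"
      using adj by blast
    from good_face[OF SC KP bv av ab[symmetric] nba adj' s(1,3,2) nb] show ?thesis by blast
  qed
  then obtain t where t: "t \<in> ?L" "card t = m - 1" "a \<notin> t" "b \<notin> t" by blast
  have ft: "finite t" by (rule card_ge_0_finite) (use t(2) assms(1) in simp)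
  define C where "C = insert a t"
  have tv: "t \<subseteq> vertices ?L" using bier_vert[OF SC t(1)] by blast
  show ?thesis
  proof (rule chrom_eq[OF chrom_upper[OF SC KP], of C])
    show "C \<subseteq> vertices ?L" unfolding C_def using tv av by blast
    show "finite C" unfolding C_def using ft by simp
    show "card C = m" unfolding C_def using ft t(2,3) assms(1) by simp
    fix u v assume u: "u \<in> C" and v: "v \<in> C" and uv: "u \<noteq> v"
    show "{u, v} \<in> ?L"
    proof (cases "u = a")
      case True
      then have "v \<in> t" using v uv unfolding C_def by blast
      then have "v \<in> vertices ?L" "v \<noteq> a" "v \<noteq> b" using tv t(3,4) by blast+
      then show ?thesis using adj True by blast
    next
      case False
      then have ut: "u \<in> t" using u unfolding C_def by blast
      show ?thesis
      proof (cases "v = a")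
        case True
        have "u \<in> vertices ?L" "u \<noteq> a" "u \<noteq> b" using ut tv t(3,4) by blast+
        then have "{a,u} \<in> ?L" using adj by blast
        then show ?thesis using True by (simp add: insert_commute)
      next
        case False
        then have "v \<in> t" using v unfolding C_def by blast
        then have "{u,v} \<subseteq> t" using ut by blast
        then show ?thesis using bier_down[OF SC t(1)] by blast
      qed
    qed
  qed
qed

end
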